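(* Let $A\in\mathsf{M}_n(\mathbb{C})$ be nonsingular and $h$-cyclic, and let $P=\{V_1,\dots,V_h\}$ be a partition of $\{1,\dots,n\}$ describing the $h$-cyclic structure of $A$. Then $|V_i|=|V_j|$ for all $i,j\in\{1,\dots,h\}$.
   Context: The digraph $\Gamma_A$ of $A=[a_{ij}]\in\mathsf{M}_n(\mathbb{C})$ has vertex set $\{1,\dots,n\}$ and arc set $\{(i,j): a_{ij}\neq 0\}$. A digraph with vertex set $V$ and arc set $E$ is cyclically $h$-partite with partition $P=\{V_1,\dots,V_h\}$ of $V$ (into $h$ nonempty parts) if for every arc $(i,j)\in E$ there is $\ell\in\{1,\dots,h\}$ with $i\in V_\ell$ and $j\in V_{\ell+1}$, where $V_{h+1}:=V_1$. The matrix $A$ is $h$-cyclic with partition $P$ (equivalently, $P$ describes the $h$-cyclic structure of $A$) if $\Gamma_A$ is cyclically $h$-partite with partition $P$; i.e., $a_{ij}\neq 0$ implies $i\in V_\ell$, $j\in V_{\ell+1}$ for some $\ell$. *)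

theory Defs
  imports "HOL-Analysis.Analysis"
begin

text \<open>Matrices in M_n(C) are rendered as complex ^'n ^'n, with the vertex set
  {1,...,n} represented by the finite index type 'n (n = CARD('n)).\<close>

definition is_partition :: "nat \<Rightarrow> (nat \<Rightarrow> 'a set) \<Rightarrow> 'a set \<Rightarrow> bool" where
  "is_partition h V S \<longleftrightarrow>
     (\<forall>l\<in>{1..h}. V l \<noteq> {}) \<and>
     (\<forall>l\<in>{1..h}. \<forall>m\<in>{1..h}. l \<noteq> m \<longrightarrow> V l \<inter> V m = {}) \<and>
     (\<Union>l\<in>{1..h}. V l) = S"

definition cyc_next :: "nat \<Rightarrow> nat \<Rightarrow> nat" where
  "cyc_next h l = (if l = h then 1 else l + 1)"

definition digraph_arcs :: "complex ^'n ^'n \<Rightarrow> ('n \<times> 'n) set" where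
  "digraph_arcs A = {(i, j). A $ i $ j \<noteq> 0}"

definition cyclically_partite :: "'a set \<Rightarrow> ('a \<times> 'a) set \<Rightarrow> nat \<Rightarrow> (nat \<Rightarrow> 'a set) \<Rightarrow> bool" where
  "cyclically_partite Vs E h V \<longleftrightarrow>
     h \<ge> 1 \<and> is_partition h V Vs \<and>
     (\<forall>(i, j)\<in>E. \<exists>l\<in>{1..h}. i \<in> V l \<and> j \<in> V (cyc_next h l))"

definition h_cyclic_with :: "complex ^'n ^'n \<Rightarrow> nat \<Rightarrow> (nat \<Rightarrow> 'n set) \<Rightarrow> bool" where
  "h_cyclic_with A h V \<longleftrightarrow> cyclically_partite UNIV (digraph_arcs A) h V"

end

theory Submission
  imports Defs
begin

lemma step_le:
  fixes A :: "complex ^'n ^'n" and h :: nat and V :: "nat \<Rightarrow> 'n set"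
  assumes inv: "invertible A"
    and cyc: "h_cyclic_with A h V"
    and l: "l \<in> {1..h}"
  shows "card (V l) \<le> card (V (cyc_next h l))"
proof -
  have dnz: "det A \<noteq> 0" using inv by (simp add: invertible_det_nz)
  have indep: "vec.independent (rows A)" using dnz det_dependent_rows[of A] by argo
  have injr: "inj (\<lambda>i. row i A)"
    proof (rule injI)
    fix x y assume "row x A = row y A" thus "x = y" using dnz det_identical_rows[of x y A] by blast
  qed
  have part: "is_partition h V UNIV"
    using cyc unfolding h_cyclic_with_def cyclically_partite_def by simp
  have arcs: "\<forall>(i, j)\<in>digraph_arcs A. \<exists>l\<in>{1..h}. i \<in> V l \<and> j \<in> V (cyc_next h l)"
    using cyc unfolding h_cyclic_with_def cyclically_partite_def by simp
  have disj: "\<And>a b. a \<in> {1..h} \<Longrightarrow> b \<in> {1..h} \<Longrightarrow> a \<noteq> b \<Longrightarrow> V a \<inter> V b = {}"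
    using part unfolding is_partition_def by blast
  let ?S = "{x::complex^'n. \<forall>j. j \<notin> V (cyc_next h l) \<longrightarrow> x$j = 0}"
  have sub: "(\<lambda>i. row i A) ` V l \<subseteq> ?S"
  proof clarify
    fix i j assume i: "i \<in> V l" and j: "j \<notin> V (cyc_next h l)"
    show "row i A $ j = 0"
    proof (rule ccontr)
      assume "row i A $ j \<noteq> 0"
      hence "(i, j) \<in> digraph_arcs A" by (simp add: row_def digraph_arcs_def)
      then obtain l' where l': "l' \<in> {1..h}" "i \<in> V l'" "j \<in> V (cyc_next h l')" using arcs by blast
      have "l' = l" proof (rule ccontr)
        assume "l' \<noteq> l" hence "V l' \<inter> V l = {}" using disj l'(1) l by blast
        thus False using i l'(2) by blast
      qed
      thus False using j l' by simp
    qed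
  qed
  have "vec.independent ((\<lambda>i. row i A) ` V l)"
    by (rule vec.independent_mono[OF indep]) (unfold rows_def, blast)
  hence "card ((\<lambda>i. row i A) ` V l) \<le> vec.dim ?S"
    by (rule vec.independent_card_le_dim[OF sub])
  moreover have "card ((\<lambda>i. row i A) ` V l) = card (V l)"
    by (rule card_image[OF inj_on_subset[OF injr subset_UNIV]])
  moreover have "vec.dim ?S = card (V (cyc_next h l))" by (rule dim_substandard_cart)
  ultimately show ?thesis by simp
qed

lemma chain_le:
  fixes f :: "nat \<Rightarrow> nat"
  assumes st: "\<And>l. 1 \<le> l \<Longrightarrow> l < h \<Longrightarrow> f l \<le> f (Suc l)"
  shows "k \<le> h \<Longrightarrow> 1 \<le> l \<Longrightarrow> l \<le> k \<Longrightarrow> f l \<le> f k"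
proof (induction k)
  case 0 then show ?case by simp
next
  case (Suc k)
  show ?case
  proof (cases "l = Suc k")
    case True then show ?thesis by simp
  next
    case False
    hence "f l \<le> f k" using Suc by simp
    moreover have "f k \<le> f (Suc k)" using st[of k] Suc.prems False by simp
    ultimately show ?thesis by simp
  qed
qed

theorem theorem3p1:
  fixes A :: "complex ^'n ^'n" and h :: nat and V :: "nat \<Rightarrow> 'n set"
  assumes "invertible A"
    and "h_cyclic_with A h V"
  shows "\<forall>i\<in>{1..h}. \<forall>j\<in>{1..h}. card (V i) = card (V j)"
proof -
  have st: "\<And>l. l \<in> {1..h} \<Longrightarrow> card (V l) \<le> card (V (cyc_next h l))"
    by (rule step_le[OF assms])
  have st2: "\<And>l. 1 \<le> l \<Longrightarrow> l < h \<Longrightarrow> card (V l) \<le> card (V (Suc l))"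
  proof -
    fix l assume "1 \<le> l" "l < h"
    thus "card (V l) \<le> card (V (Suc l))" using st[of l] by (simp add: cyc_next_def)
  qed
  have h1: "h \<ge> 1" using assms(2) unfolding h_cyclic_with_def cyclically_partite_def by simp
  hence hb: "card (V h) \<le> card (V 1)" using st[of h] by (simp add: cyc_next_def)
  have "card (V i) = card (V 1)" if i: "i \<in> {1..h}" for i
  proof -
    have "card (V 1) \<le> card (V i)" using chain_le[where f="\<lambda>l. card (V l)" and k=i and l=1, OF st2] i by simp
    moreover have "card (V i) \<le> card (V h)" using chain_le[where f="\<lambda>l. card (V l)" and k=h and l=i, OF st2] i by simp
    ultimately show ?thesis using hb by linarith
  qed
  note eq = this
  show ?thesis
  proof (intro ballI)
    fix i j assume "i \<in> {1..h}" "j \<in> {1..h}"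
    from eq[OF this(1)] eq[OF this(2)] show "card (V i) = card (V j)" by (rule trans[OF _ sym])
  qed
qed

end
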